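(* Let $R$ be a ring and $A=\bigoplus_{1\le j\le n}A_j$ an $R$-module in which each $A_j$ is a simple $R$-submodule and $A_1\cong_R A_2\cong_R\cdots\cong_R A_n$. Then for $r\in\mathbb{N}$, $\mathrm{sr}_R(A)=r$ if and only if $n=r$.
   Context: A generating subset of an $R$-submodule is minimal if no proper subset of it generates that submodule. An $R$-module $M$ has special rank $\mathrm{sr}_R(M)=r$ if every finitely generated $R$-submodule of $M$ can be generated by $r$ elements and some finitely generated $R$-submodule of $M$ has a minimal generating subset of exactly $r$ elements. *)

theory Defs
  imports "HOL-Algebra.Module"
begin

definition gen_submod :: "('a, 'c) ring_scheme \<Rightarrow> ('a, 'b, 'd) module_scheme \<Rightarrow> 'b set \<Rightarrow> 'b set" where
  "gen_submod R M S = \<Inter>{N. submodule N R M \<and> S \<subseteq> N}"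

definition generates :: "('a, 'c) ring_scheme \<Rightarrow> ('a, 'b, 'd) module_scheme \<Rightarrow> 'b set \<Rightarrow> 'b set \<Rightarrow> bool" where
  "generates R M S N \<longleftrightarrow> S \<subseteq> carrier M \<and> gen_submod R M S = N"

definition fg_submod :: "('a, 'c) ring_scheme \<Rightarrow> ('a, 'b, 'd) module_scheme \<Rightarrow> 'b set \<Rightarrow> bool" where
  "fg_submod R M N \<longleftrightarrow> submodule N R M \<and> (\<exists>S. finite S \<and> generates R M S N)"

definition minimal_gen_set :: "('a, 'c) ring_scheme \<Rightarrow> ('a, 'b, 'd) module_scheme \<Rightarrow> 'b set \<Rightarrow> 'b set \<Rightarrow> bool" where
  "minimal_gen_set R M S N \<longleftrightarrow> generates R M S N \<and> (\<forall>T. T \<subset> S \<longrightarrow> \<not> generates R M T N)"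

definition special_rank :: "('a, 'c) ring_scheme \<Rightarrow> ('a, 'b, 'd) module_scheme \<Rightarrow> nat \<Rightarrow> bool" where
  "special_rank R M r \<longleftrightarrow>
     (\<forall>N. fg_submod R M N \<longrightarrow> (\<exists>S. finite S \<and> card S \<le> r \<and> generates R M S N)) \<and>
     (\<exists>N S. fg_submod R M N \<and> minimal_gen_set R M S N \<and> finite S \<and> card S = r)"

definition simple_submod :: "('a, 'c) ring_scheme \<Rightarrow> ('a, 'b, 'd) module_scheme \<Rightarrow> 'b set \<Rightarrow> bool" where
  "simple_submod R M N \<longleftrightarrow> submodule N R M \<and> N \<noteq> {\<zero>\<^bsub>M\<^esub>} \<and>
     (\<forall>K. submodule K R M \<and> K \<subseteq> N \<longrightarrow> K = {\<zero>\<^bsub>M\<^esub>} \<or> K = N)"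

definition submod_iso :: "('a, 'c) ring_scheme \<Rightarrow> ('a, 'b, 'd) module_scheme \<Rightarrow> 'b set \<Rightarrow> 'b set \<Rightarrow> bool" where
  "submod_iso R M N K \<longleftrightarrow> (\<exists>f. bij_betw f N K \<and>
     (\<forall>x\<in>N. \<forall>y\<in>N. f (x \<oplus>\<^bsub>M\<^esub> y) = f x \<oplus>\<^bsub>M\<^esub> f y) \<and>
     (\<forall>a\<in>carrier R. \<forall>x\<in>N. f (a \<odot>\<^bsub>M\<^esub> x) = a \<odot>\<^bsub>M\<^esub> f x))"

definition internal_direct_sum :: "('a, 'c) ring_scheme \<Rightarrow> ('a, 'b, 'd) module_scheme \<Rightarrow> (nat \<Rightarrow> 'b set) \<Rightarrow> nat \<Rightarrow> bool" where
  "internal_direct_sum R M A n \<longleftrightarrow>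
     (\<forall>j<n. submodule (A j) R M) \<and>
     carrier M = {finsum M f {..<n} | f. \<forall>j<n. f j \<in> A j} \<and>
     (\<forall>f g. (\<forall>j<n. f j \<in> A j) \<and> (\<forall>j<n. g j \<in> A j) \<and> finsum M f {..<n} = finsum M g {..<n}
        \<longrightarrow> (\<forall>j<n. f j = g j))"

end

theory Submission imports Defs begin

context module begin

lemma submod_zero: "submodule N R M \<Longrightarrow> \<zero>\<^bsub>M\<^esub> \<in> N"
  using subgroup.one_closed[OF submodule.axioms(1)] by simp

lemma gen_sub: "S \<subseteq> gen_submod R M S"
  unfolding gen_submod_def by auto

lemma gen_least: "submodule N R M \<Longrightarrow> S \<subseteq> N \<Longrightarrow> gen_submod R M S \<subseteq> N"
  unfolding gen_submod_def by auto

lemma gen_carrier: "S \<subseteq> carrier M \<Longrightarrow> gen_submod R M S \<subseteq> carrier M"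
  using gen_least carrier_is_submodule by blast

lemma gen_submodule: assumes "S \<subseteq> carrier M" shows "submodule (gen_submod R M S) R M"
proof (rule submoduleI)
  show "gen_submod R M S \<subseteq> carrier M" using gen_carrier assms .
  show "\<zero>\<^bsub>M\<^esub> \<in> gen_submod R M S" unfolding gen_submod_def using submod_zero by auto
  show "\<And>a. a \<in> gen_submod R M S \<Longrightarrow> \<ominus>\<^bsub>M\<^esub> a \<in> gen_submod R M S"
    unfolding gen_submod_def using submoduleE(3) by auto
  show "\<And>a b. a \<in> gen_submod R M S \<Longrightarrow> b \<in> gen_submod R M S \<Longrightarrow> a \<oplus>\<^bsub>M\<^esub> b \<in> gen_submod R M S"
    unfolding gen_submod_def using submoduleE(5) by auto
  show "\<And>a x. a \<in> carrier R \<Longrightarrow> x \<in> gen_submod R M S \<Longrightarrow> a \<odot>\<^bsub>M\<^esub> x \<in> gen_submod R M S"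
    unfolding gen_submod_def using submoduleE(4) by auto
qed

lemma gen_mono: "S \<subseteq> T \<Longrightarrow> T \<subseteq> carrier M \<Longrightarrow> gen_submod R M S \<subseteq> gen_submod R M T"
  by (meson gen_least gen_sub gen_submodule order_trans)

lemma gen_insert: assumes X: "X \<subseteq> carrier M" and y: "y \<in> carrier M"
  shows "gen_submod R M (insert y X) \<subseteq> {u \<oplus>\<^bsub>M\<^esub> a \<odot>\<^bsub>M\<^esub> y | u a. u \<in> gen_submod R M X \<and> a \<in> carrier R}"
    (is "_ \<subseteq> ?N")
proof (rule gen_least)
  have GX: "gen_submod R M X \<subseteq> carrier M" using gen_carrier X .
  have sX: "submodule (gen_submod R M X) R M" using gen_submodule X .
  show "submodule ?N R M"
  proof (rule submoduleI)
    show "?N \<subseteq> carrier M" using GX y by auto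
    show "\<zero>\<^bsub>M\<^esub> \<in> ?N"
      using submod_zero[OF sX] y by (auto intro!: exI[of _ "\<zero>\<^bsub>M\<^esub>"] exI[of _ "\<zero>"])
    show "\<And>a x. a \<in> carrier R \<Longrightarrow> x \<in> ?N \<Longrightarrow> a \<odot>\<^bsub>M\<^esub> x \<in> ?N"
    proof -
      fix c x assume c: "c \<in> carrier R" and "x \<in> ?N"
      then obtain u a where u: "u \<in> gen_submod R M X" and a: "a \<in> carrier R" and x: "x = u \<oplus>\<^bsub>M\<^esub> a \<odot>\<^bsub>M\<^esub> y" by auto
      have "c \<odot>\<^bsub>M\<^esub> x = c \<odot>\<^bsub>M\<^esub> u \<oplus>\<^bsub>M\<^esub> (c \<otimes> a) \<odot>\<^bsub>M\<^esub> y"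
        using x u GX a c y by (auto simp: smult_r_distr smult_assoc1)
      moreover have "c \<odot>\<^bsub>M\<^esub> u \<in> gen_submod R M X" using submoduleE(4)[OF sX] c u by auto
      ultimately show "c \<odot>\<^bsub>M\<^esub> x \<in> ?N" using a c by blast
    qed
    then show "\<And>a. a \<in> ?N \<Longrightarrow> \<ominus>\<^bsub>M\<^esub> a \<in> ?N"
      by (metis (no_types, lifting) \<open>?N \<subseteq> carrier M\<close> R.add.inv_closed R.one_closed smult_l_minus smult_one subsetD)
    show "\<And>a b. a \<in> ?N \<Longrightarrow> b \<in> ?N \<Longrightarrow> a \<oplus>\<^bsub>M\<^esub> b \<in> ?N"
    proof -
      fix p q assume "p \<in> ?N" "q \<in> ?N"
      then obtain u a v b where u: "u \<in> gen_submod R M X" and a: "a \<in> carrier R" and p: "p = u \<oplus>\<^bsub>M\<^esub> a \<odot>\<^bsub>M\<^esub> y"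
        and v: "v \<in> gen_submod R M X" and b: "b \<in> carrier R" and q: "q = v \<oplus>\<^bsub>M\<^esub> b \<odot>\<^bsub>M\<^esub> y" by blast
      have uc: "u \<in> carrier M" "v \<in> carrier M" using u v GX by auto
      have "p \<oplus>\<^bsub>M\<^esub> q = (u \<oplus>\<^bsub>M\<^esub> v) \<oplus>\<^bsub>M\<^esub> (a \<oplus> b) \<odot>\<^bsub>M\<^esub> y"
        using p q uc a b y by (simp add: smult_l_distr M.a_ac)
      moreover have "u \<oplus>\<^bsub>M\<^esub> v \<in> gen_submod R M X" using submoduleE(5)[OF sX] u v by auto
      ultimately show "p \<oplus>\<^bsub>M\<^esub> q \<in> ?N" using a b by blast
    qed
  qed
  show "insert y X \<subseteq> ?N"
  proof
    fix x assume "x \<in> insert y X"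
    then show "x \<in> ?N"
    proof
      assume "x = y"
      then have "x = \<zero>\<^bsub>M\<^esub> \<oplus>\<^bsub>M\<^esub> \<one> \<odot>\<^bsub>M\<^esub> y" using y by simp
      then show ?thesis using submod_zero[OF sX] by blast
    next
      assume "x \<in> X"
      then have "x = x \<oplus>\<^bsub>M\<^esub> \<zero> \<odot>\<^bsub>M\<^esub> y" using y X by auto
      then show ?thesis using gen_sub \<open>x \<in> X\<close> by blast
    qed
  qed
qed

definition fieldlike :: bool where
  "fieldlike \<longleftrightarrow> (\<forall>z\<in>carrier M. \<forall>a\<in>carrier R. a \<odot>\<^bsub>M\<^esub> z \<noteq> \<zero>\<^bsub>M\<^esub> \<longrightarrow> (\<exists>c\<in>carrier R. c \<odot>\<^bsub>M\<^esub> (a \<odot>\<^bsub>M\<^esub> z) = z))"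

lemma exchange:
  assumes F: fieldlike and X: "X \<subseteq> carrier M" and x: "x \<in> carrier M" and y: "y \<in> carrier M"
    and xin: "x \<in> gen_submod R M (insert y X)" and xout: "x \<notin> gen_submod R M X"
  shows "y \<in> gen_submod R M (insert x X)"
proof -
  obtain u a where u: "u \<in> gen_submod R M X" and a: "a \<in> carrier R" and xe: "x = u \<oplus>\<^bsub>M\<^esub> a \<odot>\<^bsub>M\<^esub> y"
    using gen_insert[OF X y] xin by blast
  have uc: "u \<in> carrier M" using u gen_carrier X by blast
  have "a \<odot>\<^bsub>M\<^esub> y \<noteq> \<zero>\<^bsub>M\<^esub>" using xe xout u uc by auto
  then obtain c where c: "c \<in> carrier R" and cy: "c \<odot>\<^bsub>M\<^esub> (a \<odot>\<^bsub>M\<^esub> y) = y"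
    using F y a unfolding fieldlike_def by blast
  have cx: "c \<odot>\<^bsub>M\<^esub> x = c \<odot>\<^bsub>M\<^esub> u \<oplus>\<^bsub>M\<^esub> y"
    using xe cy c uc a y by (simp add: smult_r_distr)
  have cu: "c \<odot>\<^bsub>M\<^esub> u \<in> carrier M" using c uc by simp
  have yeq: "y = \<ominus>\<^bsub>M\<^esub> (c \<odot>\<^bsub>M\<^esub> u) \<oplus>\<^bsub>M\<^esub> c \<odot>\<^bsub>M\<^esub> x"
    using cx cu y by (simp add: M.a_assoc[symmetric] M.l_neg)
  have X2: "insert x X \<subseteq> carrier M" using X x by auto
  have s2: "submodule (gen_submod R M (insert x X)) R M" using gen_submodule[OF X2] .
  have "u \<in> gen_submod R M (insert x X)" using u gen_mono[OF _ X2, of X] by auto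
  then have "\<ominus>\<^bsub>M\<^esub> (c \<odot>\<^bsub>M\<^esub> u) \<in> gen_submod R M (insert x X)"
    using submoduleE(3,4)[OF s2] c by auto
  moreover have "c \<odot>\<^bsub>M\<^esub> x \<in> gen_submod R M (insert x X)"
    using submoduleE(4)[OF s2] c gen_sub[of "insert x X"] by auto
  ultimately show ?thesis using yeq submoduleE(5)[OF s2] by metis
qed

definition irred where
  "irred T \<longleftrightarrow> (\<forall>t\<in>T. t \<notin> gen_submod R M (T - {t}))"

lemma steinitz:
  assumes F: fieldlike
  shows "finite G \<Longrightarrow> G \<subseteq> carrier M \<Longrightarrow> T \<subseteq> gen_submod R M G \<Longrightarrow> irred T \<Longrightarrow> finite T \<and> card T \<le> card G"
proof (induction "card (G - T)" arbitrary: G rule: less_induct)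
  case less
  have fG: "finite G" and Gc: "G \<subseteq> carrier M" and TG: "T \<subseteq> gen_submod R M G" and iT: "irred T"
    using less.prems by blast+
  have Tc: "T \<subseteq> carrier M" using TG gen_carrier[OF Gc] by blast
  show ?case
  proof (cases "G \<subseteq> T")
    case True
    have "T \<subseteq> G"
    proof
      fix t assume t: "t \<in> T"
      show "t \<in> G"
      proof (rule ccontr)
        assume "t \<notin> G"
        then have "G \<subseteq> T - {t}" using True by blast
        moreover have "T - {t} \<subseteq> carrier M" using Tc by blast
        ultimately have "gen_submod R M G \<subseteq> gen_submod R M (T - {t})" by (rule gen_mono)
        then show False using t TG iT unfolding irred_def by blast
      qed
    qed
    then show ?thesis using fG by (simp add: card_mono finite_subset)
  next
    case False
    then obtain g where g: "g \<in> G" "g \<notin> T" by blast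
    have G1c: "G - {g} \<subseteq> carrier M" using Gc by blast
    have fGT: "finite (G - T)" using fG by simp
    have gGT: "g \<in> G - T" using g by blast
    show ?thesis
    proof (cases "T \<subseteq> gen_submod R M (G - {g})")
      case True
      have e1: "G - {g} - T = (G - T) - {g}" by blast
      have lt: "card (G - {g} - T) < card (G - T)"
        unfolding e1 using card_Diff1_less[OF fGT gGT] .
      have fG1: "finite (G - {g})" using fG by simp
      have "finite T \<and> card T \<le> card (G - {g})"
        using less.hyps[OF lt fG1 G1c True iT] .
      moreover have "card (G - {g}) \<le> card G" by (rule card_Diff1_le)
      ultimately show ?thesis by linarith
    next
      case False
      then obtain t where t: "t \<in> T" "t \<notin> gen_submod R M (G - {g})" by blast
      have tc: "t \<in> carrier M" using t Tc by blast
      have gc: "g \<in> carrier M" using g Gc by blast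
      have eG: "insert g (G - {g}) = G" using g by blast
      have "t \<in> gen_submod R M (insert g (G - {g}))" unfolding eG using t TG by blast
      then have gin: "g \<in> gen_submod R M (insert t (G - {g}))"
        using exchange[OF F G1c tc gc] t by blast
      define G' where "G' = insert t (G - {g})"
      have G'c: "G' \<subseteq> carrier M" using G1c tc unfolding G'_def by blast
      have "G \<subseteq> gen_submod R M G'"
      proof
        fix x assume x: "x \<in> G"
        show "x \<in> gen_submod R M G'"
        proof (cases "x = g")
          case True then show ?thesis using gin unfolding G'_def by simp
        next
          case False then have "x \<in> G'" using x unfolding G'_def by blast
          then show ?thesis using gen_sub[of G'] by blast
        qed
      qed
      then have "gen_submod R M G \<subseteq> gen_submod R M G'"
        by (rule gen_least[OF gen_submodule[OF G'c]])
      then have TG': "T \<subseteq> gen_submod R M G'" using TG by blast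
      have e2: "G' - T = (G - T) - {g}" using t unfolding G'_def by blast
      have lt: "card (G' - T) < card (G - T)"
        unfolding e2 using card_Diff1_less[OF fGT gGT] .
      have fG': "finite G'" using fG unfolding G'_def by simp
      have "finite T \<and> card T \<le> card G'"
        using less.hyps[OF lt fG' G'c TG' iT] .
      moreover have "card G' \<le> Suc (card (G - {g}))" unfolding G'_def using fG by (simp add: card_insert_if)
      moreover have "Suc (card (G - {g})) = card G" using card_Suc_Diff1[OF fG g(1)] .
      ultimately show ?thesis by linarith
    qed
  qed
qed

lemma minimal_irred:
  assumes "minimal_gen_set R M S N"
  shows "irred S"
  unfolding irred_def
proof
  fix t assume t: "t \<in> S"
  have Sc: "S \<subseteq> carrier M" and gS: "gen_submod R M S = N"
    using assms unfolding minimal_gen_set_def generates_def by auto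
  show "t \<notin> gen_submod R M (S - {t})"
  proof
    assume tin: "t \<in> gen_submod R M (S - {t})"
    have S1c: "S - {t} \<subseteq> carrier M" using Sc by auto
    have "S \<subseteq> gen_submod R M (S - {t})" using tin gen_sub[of "S - {t}"] by auto
    then have "gen_submod R M S \<subseteq> gen_submod R M (S - {t})"
      using gen_least gen_submodule[OF S1c] by blast
    moreover have "gen_submod R M (S - {t}) \<subseteq> gen_submod R M S" using gen_mono Sc by blast
    ultimately have "generates R M (S - {t}) N" using gS S1c unfolding generates_def by auto
    moreover have "S - {t} \<subset> S" using t by auto
    ultimately show False using assms unfolding minimal_gen_set_def by blast
  qed
qed

lemma abstract_main:
  assumes F: fieldlike and fE: "finite E" and Ec: "E \<subseteq> carrier M"
    and gE: "gen_submod R M E = carrier M" and iE: "irred E"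
  shows "special_rank R M r \<longleftrightarrow> card E = r"
proof -
  have A: "card S \<le> card E" if "minimal_gen_set R M S N" for S N
  proof -
    have "S \<subseteq> carrier M" using that unfolding minimal_gen_set_def generates_def by auto
    then show ?thesis using steinitz[OF F fE Ec] gE minimal_irred[OF that] by auto
  qed
  have B: "card E \<le> card S" if "finite S" "generates R M S (carrier M)" for S
    using steinitz[OF F that(1), of E] that(2) iE Ec unfolding generates_def by auto
  have Egen: "generates R M E (carrier M)" using Ec gE unfolding generates_def by auto
  have fgM: "fg_submod R M (carrier M)"
    unfolding fg_submod_def using carrier_is_submodule fE Egen by blast
  have Emin: "minimal_gen_set R M E (carrier M)"
    unfolding minimal_gen_set_def
  proof (intro conjI allI impI Egen notI)
    fix T assume TE: "T \<subset> E" and gT: "generates R M T (carrier M)"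
    then obtain e where e: "e \<in> E" "e \<notin> T" by auto
    have "T \<subseteq> E - {e}" using TE e by auto
    then have "gen_submod R M T \<subseteq> gen_submod R M (E - {e})" using gen_mono Ec by blast
    then have "e \<in> gen_submod R M (E - {e})" using gT e Ec unfolding generates_def by auto
    then show False using iE e unfolding irred_def by blast
  qed
  have D: "\<exists>S. finite S \<and> card S \<le> card E \<and> generates R M S N" if "fg_submod R M N" for N
  proof -
    have "\<exists>G. finite G \<and> generates R M G N" using that unfolding fg_submod_def by (rule conjunct2)
    then obtain G where fG: "finite G" and gG: "generates R M G N" by (elim exE conjE)
    define P where "P k \<longleftrightarrow> (\<exists>S\<subseteq>G. card S = k \<and> generates R M S N)" for k
    have "P (card G)" using gG unfolding P_def by auto
    then have "\<exists>k. P k" by (rule exI)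
    then have "\<exists>k. P k \<and> (\<forall>m<k. \<not> P m)" by (simp only: exists_least_iff[of P, symmetric])
    then obtain k where Pk: "P k" and kmin: "\<And>m. m < k \<Longrightarrow> \<not> P m" by blast
    then obtain S where SG: "S \<subseteq> G" and cS: "card S = k" and gS: "generates R M S N"
      unfolding P_def by auto
    have fS: "finite S" using SG fG finite_subset by auto
    have "minimal_gen_set R M S N"
      unfolding minimal_gen_set_def
    proof (intro conjI allI impI gS notI)
      fix T assume TS: "T \<subset> S" and gT: "generates R M T N"
      have "card T < k" using TS fS cS psubset_card_mono by blast
      moreover have "P (card T)" using TS SG gT unfolding P_def by auto
      ultimately show False using kmin by blast
    qed
    then show ?thesis using A fS gS by blast
  qed
  show ?thesis
  proof
    assume sr: "special_rank R M r"
    then obtain S where S1: "finite S" and S2: "card S \<le> r" and S3: "generates R M S (carrier M)"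
      using fgM unfolding special_rank_def by blast
    have "card E \<le> r" using B[OF S1 S3] S2 by linarith
    moreover obtain N S' where S'1: "minimal_gen_set R M S' N" and S'2: "card S' = r"
      using sr unfolding special_rank_def by blast
    have "r \<le> card E" using A[OF S'1] S'2 by simp
    ultimately show "card E = r" by simp
  next
    assume "card E = r"
    then show "special_rank R M r"
      unfolding special_rank_def
    proof (intro conjI allI impI)
      fix N assume "fg_submod R M N"
      from D[OF this] show "\<exists>S. finite S \<and> card S \<le> r \<and> generates R M S N" using \<open>card E = r\<close> by simp
    next
      show "\<exists>N S. fg_submod R M N \<and> minimal_gen_set R M S N \<and> finite S \<and> card S = r"
        using fgM Emin fE \<open>card E = r\<close> by blast
    qed
  qed
qed

end

context module begin

lemma submod_Int: "submodule N R M \<Longrightarrow> submodule K R M \<Longrightarrow> submodule (N \<inter> K) R M"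
  apply (rule submoduleI)
  using submoduleE[of N] submoduleE[of K] submod_zero[of N] submod_zero[of K] by auto

lemma submod_finsum:
  assumes N: "submodule N R M" and fI: "finite I"
  shows "(\<forall>i\<in>I. f i \<in> N) \<Longrightarrow> finsum M f I \<in> N"
  using fI
proof (induction I rule: finite_induct)
  case empty
  then show ?case using submod_zero[OF N] by simp
next
  case (insert x F)
  have Nc: "N \<subseteq> carrier M" using submoduleE(1)[OF N] .
  have "finsum M f (insert x F) = f x \<oplus>\<^bsub>M\<^esub> finsum M f F"
    using insert Nc by (intro finsum_insert) auto
  moreover have "finsum M f F \<in> N" using insert by auto
  ultimately show ?case using submoduleE(5)[OF N] insert.prems by auto
qed

lemma cyclic_submod:
  assumes v: "v \<in> carrier M"
  shows "submodule {c \<odot>\<^bsub>M\<^esub> v | c. c \<in> carrier R} R M" (is "submodule ?C R M")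
proof (rule submoduleI)
  show "?C \<subseteq> carrier M" using v by auto
  have "\<zero>\<^bsub>M\<^esub> = \<zero> \<odot>\<^bsub>M\<^esub> v" using v by simp
  then show "\<zero>\<^bsub>M\<^esub> \<in> ?C" by blast
  show sm: "\<And>a x. a \<in> carrier R \<Longrightarrow> x \<in> ?C \<Longrightarrow> a \<odot>\<^bsub>M\<^esub> x \<in> ?C"
  proof -
    fix a x assume a: "a \<in> carrier R" and "x \<in> ?C"
    then obtain c where c: "c \<in> carrier R" and x: "x = c \<odot>\<^bsub>M\<^esub> v" by blast
    have "a \<odot>\<^bsub>M\<^esub> x = (a \<otimes> c) \<odot>\<^bsub>M\<^esub> v" using x a c v by (simp add: smult_assoc1)
    then show "a \<odot>\<^bsub>M\<^esub> x \<in> ?C" using a c by blast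
  qed
  show "\<And>x. x \<in> ?C \<Longrightarrow> \<ominus>\<^bsub>M\<^esub> x \<in> ?C"
  proof -
    fix x assume x: "x \<in> ?C"
    then have xc: "x \<in> carrier M" using v by auto
    have "\<ominus>\<^bsub>M\<^esub> x = (\<ominus> \<one>) \<odot>\<^bsub>M\<^esub> x" using xc by (simp add: smult_l_minus)
    then show "\<ominus>\<^bsub>M\<^esub> x \<in> ?C" using sm[OF _ x, of "\<ominus> \<one>"] by simp
  qed
  show "\<And>x y. x \<in> ?C \<Longrightarrow> y \<in> ?C \<Longrightarrow> x \<oplus>\<^bsub>M\<^esub> y \<in> ?C"
  proof -
    fix x y assume "x \<in> ?C" "y \<in> ?C"
    then obtain c d where c: "c \<in> carrier R" "x = c \<odot>\<^bsub>M\<^esub> v" and d: "d \<in> carrier R" "y = d \<odot>\<^bsub>M\<^esub> v" by blast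
    have "x \<oplus>\<^bsub>M\<^esub> y = (c \<oplus> d) \<odot>\<^bsub>M\<^esub> v" using c d v by (simp add: smult_l_distr)
    then show "x \<oplus>\<^bsub>M\<^esub> y \<in> ?C" using c d by blast
  qed
qed

lemma simple_cyclic:
  assumes S: "simple_submod R M N" and v: "v \<in> N" "v \<noteq> \<zero>\<^bsub>M\<^esub>"
  shows "N = {c \<odot>\<^bsub>M\<^esub> v | c. c \<in> carrier R}"
proof -
  have sN: "submodule N R M" using S unfolding simple_submod_def by blast
  have vc: "v \<in> carrier M" using submoduleE(1)[OF sN] v by blast
  have sub: "{c \<odot>\<^bsub>M\<^esub> v | c. c \<in> carrier R} \<subseteq> N" using submoduleE(4)[OF sN] v by blast
  have "v \<in> {c \<odot>\<^bsub>M\<^esub> v | c. c \<in> carrier R}"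
    using vc by (intro CollectI exI[of _ \<one>]) simp
  then have "{c \<odot>\<^bsub>M\<^esub> v | c. c \<in> carrier R} \<noteq> {\<zero>\<^bsub>M\<^esub>}" using v by blast
  then show ?thesis using S cyclic_submod[OF vc] sub unfolding simple_submod_def by blast
qed

end

theorem corollary2:
  fixes R :: "('a, 'c) ring_scheme" and M :: "('a, 'b, 'd) module_scheme"
    and A :: "nat \<Rightarrow> 'b set" and n r :: nat
  assumes "module R M"
    and "internal_direct_sum R M A n"
    and "\<forall>j<n. simple_submod R M (A j)"
    and "\<forall>j<n. \<forall>k<n. submod_iso R M (A j) (A k)"
  shows "special_rank R M r \<longleftrightarrow> n = r"
proof -
  interpret module R M by fact
  have sub: "\<And>j. j < n \<Longrightarrow> submodule (A j) R M" using assms(2) unfolding internal_direct_sum_def by blast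
  have Ac: "\<And>j. j < n \<Longrightarrow> A j \<subseteq> carrier M" using sub submoduleE(1) by blast
  have A0: "\<And>j. j < n \<Longrightarrow> \<zero>\<^bsub>M\<^esub> \<in> A j" using sub submod_zero by blast
  have carr: "carrier M = {finsum M f {..<n} | f. \<forall>j<n. f j \<in> A j}"
    using assms(2) unfolding internal_direct_sum_def by blast
  have uniq: "\<And>f g j. (\<forall>j<n. f j \<in> A j) \<Longrightarrow> (\<forall>j<n. g j \<in> A j) \<Longrightarrow> finsum M f {..<n} = finsum M g {..<n} \<Longrightarrow> j < n \<Longrightarrow> f j = g j"
    using assms(2) unfolding internal_direct_sum_def by blast
  show ?thesis
  proof (cases "n = 0")
    case True
    have cz: "carrier M = {\<zero>\<^bsub>M\<^esub>}" using carr True by simp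
    have F: fieldlike unfolding fieldlike_def using cz by auto
    have g0: "gen_submod R M {} = carrier M"
    proof
      show "gen_submod R M {} \<subseteq> carrier M" using gen_carrier by blast
      show "carrier M \<subseteq> gen_submod R M {}"
        using cz submod_zero[OF gen_submodule[of "{}"]] by simp
    qed
    have "special_rank R M r \<longleftrightarrow> card ({} :: 'b set) = r"
      by (rule abstract_main[OF F]) (auto simp: g0 irred_def)
    then show ?thesis using True by simp
  next
    case False
    have "\<forall>j. \<exists>x. j < n \<longrightarrow> x \<in> A j \<and> x \<noteq> \<zero>\<^bsub>M\<^esub>"
    proof
      fix j show "\<exists>x. j < n \<longrightarrow> x \<in> A j \<and> x \<noteq> \<zero>\<^bsub>M\<^esub>"
      proof (cases "j < n")
        case True
        then have "A j \<noteq> {\<zero>\<^bsub>M\<^esub>}" using assms(3) unfolding simple_submod_def by blast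
        then show ?thesis using A0[OF True] by blast
      qed simp
    qed
    then obtain e where e: "\<And>j. j < n \<Longrightarrow> e j \<in> A j" and enz: "\<And>j. j < n \<Longrightarrow> e j \<noteq> \<zero>\<^bsub>M\<^esub>"
      by metis
    define E where "E = e ` {..<n}"
    define ind where "ind k x = (\<lambda>j::nat. if k = j then x else \<zero>\<^bsub>M\<^esub>)" for k x
    have indA: "\<And>k x. k < n \<Longrightarrow> x \<in> A k \<Longrightarrow> \<forall>j<n. ind k x j \<in> A j"
      unfolding ind_def using A0 by auto
    have indsum: "\<And>k x. k < n \<Longrightarrow> x \<in> A k \<Longrightarrow> finsum M (ind k x) {..<n} = x"
    proof -
      fix k x assume k: "k < n" and x: "x \<in> A k"
      have xc: "x \<in> carrier M" using Ac[OF k] x by blast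
      show "finsum M (ind k x) {..<n} = x"
        unfolding ind_def using finsum_singleton[of k "{..<n}" "\<lambda>_. x"] k xc by simp
    qed
    have inj: "inj_on e {..<n}"
    proof (rule inj_onI)
      fix j k assume j: "j \<in> {..<n}" and k: "k \<in> {..<n}" and ejk: "e j = e k"
      show "j = k"
      proof (rule ccontr)
        assume jk: "j \<noteq> k"
        have "finsum M (ind j (e j)) {..<n} = finsum M (ind k (e k)) {..<n}"
        proof -
          have jn: "j < n" and kn: "k < n" using j k by auto
          have "finsum M (ind j (e j)) {..<n} = e j" using indsum[OF jn e[OF jn]] .
          moreover have "finsum M (ind k (e k)) {..<n} = e k" using indsum[OF kn e[OF kn]] .
          ultimately show ?thesis using ejk by simp
        qed
        then have "ind j (e j) j = ind k (e k) j"
          using uniq[OF indA indA] e j k by blast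
        then have "e j = \<zero>\<^bsub>M\<^esub>" using jk unfolding ind_def by simp
        then show False using enz j by blast
      qed
    qed
    have cardE: "card E = n" unfolding E_def using card_image[OF inj] by simp
    have Ec: "E \<subseteq> carrier M" unfolding E_def using e Ac by blast
    have sG: "submodule (gen_submod R M E) R M" using gen_submodule[OF Ec] .
    have AG: "\<And>j. j < n \<Longrightarrow> A j \<subseteq> gen_submod R M E"
    proof -
      fix j assume j: "j < n"
      have s1: "submodule (A j \<inter> gen_submod R M E) R M" using submod_Int[OF sub[OF j] sG] .
      have "e j \<in> A j \<inter> gen_submod R M E" using e[OF j] gen_sub[of E] j unfolding E_def by blast
      then have "A j \<inter> gen_submod R M E \<noteq> {\<zero>\<^bsub>M\<^esub>}" using enz[OF j] by blast
      then have "A j \<inter> gen_submod R M E = A j"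
        using assms(3) j s1 unfolding simple_submod_def by blast
      then show "A j \<subseteq> gen_submod R M E" by blast
    qed
    have gE: "gen_submod R M E = carrier M"
    proof
      show "gen_submod R M E \<subseteq> carrier M" using gen_carrier[OF Ec] .
      show "carrier M \<subseteq> gen_submod R M E"
      proof
        fix x assume "x \<in> carrier M"
        then obtain f where f: "\<forall>j<n. f j \<in> A j" and x: "x = finsum M f {..<n}" using carr by blast
        have "\<forall>i\<in>{..<n}. f i \<in> gen_submod R M E" using f AG by blast
        then show "x \<in> gen_submod R M E" using submod_finsum[OF sG, of "{..<n}" f] x by simp
      qed
    qed
    have irr: "irred E"
      unfolding irred_def
    proof
      fix t assume "t \<in> E"
      then obtain k where k: "k < n" and tk: "t = e k" unfolding E_def by blast
      define Nk where "Nk = {finsum M f {..<n} | f. (\<forall>j<n. f j \<in> A j) \<and> f k = \<zero>\<^bsub>M\<^esub>}"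
      have fc: "\<And>f. \<forall>j<n. f j \<in> A j \<Longrightarrow> f \<in> {..<n} \<rightarrow> carrier M"
      proof (rule Pi_I)
        fix f j assume "\<forall>j<n. f j \<in> A j" "j \<in> {..<n}"
        then show "f j \<in> carrier M" using Ac[of j] by auto
      qed
      have sNk: "submodule Nk R M"
      proof (rule submoduleI)
        show "Nk \<subseteq> carrier M"
        proof
          fix x assume "x \<in> Nk"
          then obtain f where "\<forall>j<n. f j \<in> A j" "x = finsum M f {..<n}" unfolding Nk_def by blast
          then show "x \<in> carrier M" using finsum_closed[OF fc] by simp
        qed
        have "finsum M (\<lambda>_. \<zero>\<^bsub>M\<^esub>) {..<n} = \<zero>\<^bsub>M\<^esub>" by (rule finsum_zero)
        then show "\<zero>\<^bsub>M\<^esub> \<in> Nk" unfolding Nk_def using A0 by (intro CollectI exI[of _ "\<lambda>_. \<zero>\<^bsub>M\<^esub>"]) auto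
        show sm: "\<And>a x. a \<in> carrier R \<Longrightarrow> x \<in> Nk \<Longrightarrow> a \<odot>\<^bsub>M\<^esub> x \<in> Nk"
        proof -
          fix a x assume a: "a \<in> carrier R" and "x \<in> Nk"
          then obtain f where f: "\<forall>j<n. f j \<in> A j" "f k = \<zero>\<^bsub>M\<^esub>" and x: "x = finsum M f {..<n}"
            unfolding Nk_def by blast
          have "a \<odot>\<^bsub>M\<^esub> x = finsum M (\<lambda>j. a \<odot>\<^bsub>M\<^esub> f j) {..<n}"
            using finsum_smult_ldistr[OF _ a fc[OF f(1)]] x by simp
          moreover have "\<forall>j<n. a \<odot>\<^bsub>M\<^esub> f j \<in> A j" using f a submoduleE(4)[OF sub] by blast
          moreover have "a \<odot>\<^bsub>M\<^esub> f k = \<zero>\<^bsub>M\<^esub>" using f a by simp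
          ultimately show "a \<odot>\<^bsub>M\<^esub> x \<in> Nk" unfolding Nk_def by blast
        qed
        show "\<And>x. x \<in> Nk \<Longrightarrow> \<ominus>\<^bsub>M\<^esub> x \<in> Nk"
        proof -
          fix x assume x: "x \<in> Nk"
          then have xc: "x \<in> carrier M" using \<open>Nk \<subseteq> carrier M\<close> by blast
          have "\<ominus>\<^bsub>M\<^esub> x = (\<ominus>\<^bsub>R\<^esub> \<one>\<^bsub>R\<^esub>) \<odot>\<^bsub>M\<^esub> x" using xc by (simp add: smult_l_minus)
          then show "\<ominus>\<^bsub>M\<^esub> x \<in> Nk" using sm[OF _ x, of "\<ominus>\<^bsub>R\<^esub> \<one>\<^bsub>R\<^esub>"] by simp
        qed
        show "\<And>x y. x \<in> Nk \<Longrightarrow> y \<in> Nk \<Longrightarrow> x \<oplus>\<^bsub>M\<^esub> y \<in> Nk"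
        proof -
          fix x y assume "x \<in> Nk" "y \<in> Nk"
          then obtain f g where f: "\<forall>j<n. f j \<in> A j" "f k = \<zero>\<^bsub>M\<^esub>" and x: "x = finsum M f {..<n}"
            and g: "\<forall>j<n. g j \<in> A j" "g k = \<zero>\<^bsub>M\<^esub>" and y: "y = finsum M g {..<n}"
            unfolding Nk_def by blast
          have "x \<oplus>\<^bsub>M\<^esub> y = finsum M (\<lambda>j. f j \<oplus>\<^bsub>M\<^esub> g j) {..<n}"
            using finsum_addf[OF fc[OF f(1)] fc[OF g(1)]] x y by simp
          moreover have "\<forall>j<n. f j \<oplus>\<^bsub>M\<^esub> g j \<in> A j" using f g submoduleE(5)[OF sub] by blast
          moreover have "f k \<oplus>\<^bsub>M\<^esub> g k = \<zero>\<^bsub>M\<^esub>" using f g by simp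
          ultimately show "x \<oplus>\<^bsub>M\<^esub> y \<in> Nk" unfolding Nk_def by blast
        qed
      qed
      have "E - {t} \<subseteq> Nk"
      proof
        fix x assume "x \<in> E - {t}"
        then obtain j where j: "j < n" and xj: "x = e j" and jk: "j \<noteq> k" unfolding E_def tk by blast
        have "x = finsum M (ind j (e j)) {..<n}" using indsum[OF j e[OF j]] xj by simp
        moreover have "ind j (e j) k = \<zero>\<^bsub>M\<^esub>" using jk unfolding ind_def by simp
        ultimately show "x \<in> Nk" unfolding Nk_def using indA[OF j e[OF j]] by blast
      qed
      then have "gen_submod R M (E - {t}) \<subseteq> Nk" using gen_least[OF sNk] by blast
      moreover have "t \<notin> Nk"
      proof
        assume "t \<in> Nk"
        then obtain f where f: "\<forall>j<n. f j \<in> A j" "f k = \<zero>\<^bsub>M\<^esub>" and x: "t = finsum M f {..<n}"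
          unfolding Nk_def by blast
        have "finsum M f {..<n} = finsum M (ind k (e k)) {..<n}" using x tk indsum[OF k e[OF k]] by simp
        then have "f k = ind k (e k) k" using uniq[OF f(1) indA[OF k e[OF k]]] k by blast
        then have "e k = \<zero>\<^bsub>M\<^esub>" using f(2) unfolding ind_def by simp
        then show False using enz[OF k] by blast
      qed
      ultimately show "t \<notin> gen_submod R M (E - {t})" by blast
    qed
    have n0: "0 < n" using False by simp
    define e0 where "e0 = e 0"
    have e0A: "e0 \<in> A 0" and e0nz: "e0 \<noteq> \<zero>\<^bsub>M\<^esub>" using e[OF n0] enz[OF n0] unfolding e0_def by auto
    have e0c: "e0 \<in> carrier M" using Ac[OF n0] e0A by blast
    have simp0: "simple_submod R M (A 0)" using assms(3) n0 by blast
    have annM: "\<And>a z. a \<in> carrier R \<Longrightarrow> a \<odot>\<^bsub>M\<^esub> e0 = \<zero>\<^bsub>M\<^esub> \<Longrightarrow> z \<in> carrier M \<Longrightarrow> a \<odot>\<^bsub>M\<^esub> z = \<zero>\<^bsub>M\<^esub>"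
    proof -
      fix a z assume a: "a \<in> carrier R" and ae: "a \<odot>\<^bsub>M\<^esub> e0 = \<zero>\<^bsub>M\<^esub>" and z: "z \<in> carrier M"
      have ann0: "\<And>x. x \<in> A 0 \<Longrightarrow> a \<odot>\<^bsub>M\<^esub> x = \<zero>\<^bsub>M\<^esub>"
      proof -
        fix x assume "x \<in> A 0"
        then obtain b where b: "b \<in> carrier R" and x: "x = b \<odot>\<^bsub>M\<^esub> e0"
          using simple_cyclic[OF simp0 e0A e0nz] by blast
        have "a \<odot>\<^bsub>M\<^esub> x = (a \<otimes>\<^bsub>R\<^esub> b) \<odot>\<^bsub>M\<^esub> e0" using x a b e0c by (simp add: smult_assoc1)
        also have "\<dots> = (b \<otimes>\<^bsub>R\<^esub> a) \<odot>\<^bsub>M\<^esub> e0" using a b by (simp add: R.m_comm)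
        also have "\<dots> = b \<odot>\<^bsub>M\<^esub> (a \<odot>\<^bsub>M\<^esub> e0)" using a b e0c by (simp add: smult_assoc1)
        also have "\<dots> = \<zero>\<^bsub>M\<^esub>" using ae b by simp
        finally show "a \<odot>\<^bsub>M\<^esub> x = \<zero>\<^bsub>M\<^esub>" .
      qed
      have annj: "\<And>j y. j < n \<Longrightarrow> y \<in> A j \<Longrightarrow> a \<odot>\<^bsub>M\<^esub> y = \<zero>\<^bsub>M\<^esub>"
      proof -
        fix j y assume j: "j < n" and y: "y \<in> A j"
        obtain f where bij: "bij_betw f (A 0) (A j)"
          and fadd: "\<forall>x\<in>A 0. \<forall>y\<in>A 0. f (x \<oplus>\<^bsub>M\<^esub> y) = f x \<oplus>\<^bsub>M\<^esub> f y"
          and fsm: "\<forall>a\<in>carrier R. \<forall>x\<in>A 0. f (a \<odot>\<^bsub>M\<^esub> x) = a \<odot>\<^bsub>M\<^esub> f x"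
          using assms(4) n0 j unfolding submod_iso_def by blast
        have z0: "\<zero>\<^bsub>M\<^esub> \<in> A 0" using A0[OF n0] .
        have f0c: "f \<zero>\<^bsub>M\<^esub> \<in> carrier M" using bij z0 Ac[OF j] unfolding bij_betw_def by blast
        have "f \<zero>\<^bsub>M\<^esub> = f \<zero>\<^bsub>M\<^esub> \<oplus>\<^bsub>M\<^esub> f \<zero>\<^bsub>M\<^esub>" using fadd z0 by (metis M.l_zero M.zero_closed)
        then have f0: "f \<zero>\<^bsub>M\<^esub> = \<zero>\<^bsub>M\<^esub>" using M.add.l_cancel_one'[OF f0c f0c] by simp
        obtain x where x: "x \<in> A 0" and yx: "y = f x" using bij y unfolding bij_betw_def by blast
        have "a \<odot>\<^bsub>M\<^esub> y = f (a \<odot>\<^bsub>M\<^esub> x)" using fsm a x yx by simp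
        also have "\<dots> = \<zero>\<^bsub>M\<^esub>" using ann0[OF x] f0 by simp
        finally show "a \<odot>\<^bsub>M\<^esub> y = \<zero>\<^bsub>M\<^esub>" .
      qed
      obtain f where f: "\<forall>j<n. f j \<in> A j" and zf: "z = finsum M f {..<n}" using carr z by blast
      have fc: "f \<in> {..<n} \<rightarrow> carrier M"
      proof (rule Pi_I)
        fix j assume "j \<in> {..<n}"
        then show "f j \<in> carrier M" using f Ac[of j] by auto
      qed
      have "a \<odot>\<^bsub>M\<^esub> z = finsum M (\<lambda>j. a \<odot>\<^bsub>M\<^esub> f j) {..<n}"
        using finsum_smult_ldistr[OF _ a fc] zf by simp
      also have "\<dots> = finsum M (\<lambda>j. \<zero>\<^bsub>M\<^esub>) {..<n}"
        by (rule finsum_cong) (use annj f a Ac in auto)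
      also have "\<dots> = \<zero>\<^bsub>M\<^esub>" by (rule finsum_zero)
      finally show "a \<odot>\<^bsub>M\<^esub> z = \<zero>\<^bsub>M\<^esub>" .
    qed
    have F: fieldlike
      unfolding fieldlike_def
    proof (intro ballI impI)
      fix z a assume z: "z \<in> carrier M" and a: "a \<in> carrier R" and az: "a \<odot>\<^bsub>M\<^esub> z \<noteq> \<zero>\<^bsub>M\<^esub>"
      have ae: "a \<odot>\<^bsub>M\<^esub> e0 \<noteq> \<zero>\<^bsub>M\<^esub>"
      proof
        assume "a \<odot>\<^bsub>M\<^esub> e0 = \<zero>\<^bsub>M\<^esub>"
        then have "a \<odot>\<^bsub>M\<^esub> z = \<zero>\<^bsub>M\<^esub>" by (rule annM[OF a _ z])
        with az show False by contradiction
      qed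
      have aeA: "a \<odot>\<^bsub>M\<^esub> e0 \<in> A 0" using submoduleE(4)[OF sub[OF n0] a e0A] .
      have eqA: "A 0 = {c \<odot>\<^bsub>M\<^esub> (a \<odot>\<^bsub>M\<^esub> e0) | c. c \<in> carrier R}"
        by (rule simple_cyclic[OF simp0 aeA ae])
      have "e0 \<in> {c \<odot>\<^bsub>M\<^esub> (a \<odot>\<^bsub>M\<^esub> e0) | c. c \<in> carrier R}"
        using e0A by (simp only: eqA)
      then have "\<exists>c. e0 = c \<odot>\<^bsub>M\<^esub> (a \<odot>\<^bsub>M\<^esub> e0) \<and> c \<in> carrier R" by (simp only: mem_Collect_eq)
      then obtain c where ce0: "e0 = c \<odot>\<^bsub>M\<^esub> (a \<odot>\<^bsub>M\<^esub> e0)" and c: "c \<in> carrier R" by (elim exE conjE)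
      have ce: "c \<odot>\<^bsub>M\<^esub> (a \<odot>\<^bsub>M\<^esub> e0) = e0" using ce0 by (rule sym)
      define d where "d = c \<otimes>\<^bsub>R\<^esub> a \<oplus>\<^bsub>R\<^esub> \<ominus>\<^bsub>R\<^esub> \<one>\<^bsub>R\<^esub>"
      have dc: "d \<in> carrier R" using c a unfolding d_def by simp
      have "d \<odot>\<^bsub>M\<^esub> e0 = (c \<otimes>\<^bsub>R\<^esub> a) \<odot>\<^bsub>M\<^esub> e0 \<oplus>\<^bsub>M\<^esub> (\<ominus>\<^bsub>R\<^esub> \<one>\<^bsub>R\<^esub>) \<odot>\<^bsub>M\<^esub> e0"
        unfolding d_def using c a e0c by (simp add: smult_l_distr)
      also have "\<dots> = e0 \<oplus>\<^bsub>M\<^esub> \<ominus>\<^bsub>M\<^esub> e0" using ce c a e0c by (simp add: smult_assoc1 smult_l_minus)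
      also have "\<dots> = \<zero>\<^bsub>M\<^esub>" using e0c by (rule M.r_neg)
      finally have dz0: "d \<odot>\<^bsub>M\<^esub> z = \<zero>\<^bsub>M\<^esub>" using annM[OF dc _ z] by blast
      have dz: "d \<odot>\<^bsub>M\<^esub> z = c \<odot>\<^bsub>M\<^esub> (a \<odot>\<^bsub>M\<^esub> z) \<oplus>\<^bsub>M\<^esub> \<ominus>\<^bsub>M\<^esub> z"
        unfolding d_def using c a z by (simp add: smult_l_distr smult_assoc1 smult_l_minus)
      have eq0: "c \<odot>\<^bsub>M\<^esub> (a \<odot>\<^bsub>M\<^esub> z) \<oplus>\<^bsub>M\<^esub> \<ominus>\<^bsub>M\<^esub> z = \<zero>\<^bsub>M\<^esub>"
        using dz dz0 by (rule trans[OF sym])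
      have pc: "c \<odot>\<^bsub>M\<^esub> (a \<odot>\<^bsub>M\<^esub> z) \<in> carrier M" using c a z by simp
      have "c \<odot>\<^bsub>M\<^esub> (a \<odot>\<^bsub>M\<^esub> z) = (c \<odot>\<^bsub>M\<^esub> (a \<odot>\<^bsub>M\<^esub> z) \<oplus>\<^bsub>M\<^esub> \<ominus>\<^bsub>M\<^esub> z) \<oplus>\<^bsub>M\<^esub> z"
        using pc z by (simp add: M.a_assoc M.l_neg)
      also have "\<dots> = \<zero>\<^bsub>M\<^esub> \<oplus>\<^bsub>M\<^esub> z" by (simp only: eq0)
      also have "\<dots> = z" using z by simp
      finally have "c \<odot>\<^bsub>M\<^esub> (a \<odot>\<^bsub>M\<^esub> z) = z" .
      then show "\<exists>c\<in>carrier R. c \<odot>\<^bsub>M\<^esub> (a \<odot>\<^bsub>M\<^esub> z) = z" using c by blast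
    qed
    have "special_rank R M r \<longleftrightarrow> card E = r"
      using abstract_main[OF F _ Ec gE irr] unfolding E_def by simp
    then show ?thesis using cardE by simp
  qed
qed

end
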